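(* Let $L\subseteq\Sigma^\omega$ be of the form $L=\bigcup_{i=1}^n U_iV_i^\omega$ where each $U_i\subseteq\Sigma^*$ is Parikh-recognizable and each $V_i\subseteq\Sigma^*$ is regular. Then $L$ is LPBA-recognizable.
   Context: For $V\subseteq\Sigma^*$, $V^\omega=\{w_1w_2\cdots\mid w_i\in V\setminus\{\varepsilon\}\}$. A semi-linear set in $\mathbb{N}^d$ (resp. $(\mathbb{N}\cup\{\infty\})^d$) is a finite union of sets $\{b_0+\sum_{j=1}^\ell b_jz_j\mid z_j\in\mathbb{N}\}$ with $b_j\in\mathbb{N}^d$ (resp. $(\mathbb{N}\cup\{\infty\})^d$), with arithmetic $z+\infty=\infty+z=\infty+\infty=\infty$, $z\cdot\infty=\infty\cdot z=\infty$ for $z>0$, $0\cdot\infty=\infty\cdot0=0$. A Parikh automaton (PA) of dimension $d$ is $(Q,\Sigma,q_0,\Delta,F,C)$ with finite $Q$, $q_0\in Q$, $F\subseteq Q$, finite $\Delta\subseteq Q\times\Sigma\times\mathbb{N}^d\times Q$, semi-linear $C\subseteq\mathbb{N}^d$; it accepts a finite word $x_1\cdots x_n$ if there is a run $r_i=(p_{i-1},x_i,\mathbf{v}_i,p_i)\in\Delta$, $p_0=q_0$, with $p_n\in F$ and $\sum_i\mathbf{v}_i\in C$; Parikh-recognizable languages are those accepted by PA. A limit Parikh–Büchi automaton (LPBA) is such a tuple but with $C\subseteq(\mathbb{N}\cup\{\infty\})^d$ semi-linear; a run $r_1r_2\cdots$ on an infinite word ($r_i=(p_{i-1},\alpha_i,\mathbf{v}_i,p_i)$,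 $p_0=q_0$) is accepting if $p_i\in F$ for infinitely many $i$ and $\rho(r)\in C$, where the $j$-th component of $\rho(r)$ is $\infty$ if infinitely many $\mathbf{v}_i$ have nonzero $j$-th component and otherwise is the finite sum of the $j$-th components. $L$ is LPBA-recognizable if it is the set of infinite words with an accepting run of some LPBA. *)

theory Defs
  imports Main "HOL-Library.Extended_Nat" "HOL-Library.Omega_Words_Fun"
begin

definition vadd :: "'b::semiring_1 list \<Rightarrow> 'b list \<Rightarrow> 'b list" where
  "vadd xs ys = map2 (+) xs ys"

definition smult :: "'b::semiring_1 \<Rightarrow> 'b list \<Rightarrow> 'b list" where
  "smult c xs = map ((*) c) xs"

text \<open>Linear set with base b0 and periods Ps: b0 + sum_j z_j * b_j, z_j natural.
  Arithmetic on enat satisfies the conventions of the paper (0 * infinity = 0).\<close>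
definition lin_set :: "'b::semiring_1 list \<Rightarrow> 'b list list \<Rightarrow> 'b list set" where
  "lin_set b0 Ps = {foldr vadd (map2 (\<lambda>z p. smult (of_nat z) p) zs Ps) b0
                     | zs :: nat list. length zs = length Ps}"

definition semilinear :: "nat \<Rightarrow> 'b::semiring_1 list set \<Rightarrow> bool" where
  "semilinear d C \<longleftrightarrow> (\<exists>B :: ('b list \<times> 'b list list) set. finite B \<and>
      (\<forall>(b0, Ps) \<in> B. length b0 = d \<and> (\<forall>p \<in> set Ps. length p = d)) \<and>
      C = (\<Union>(b0, Ps) \<in> B. lin_set b0 Ps))"

record ('q, 'a) pa =
  pa_states :: "'q set"
  pa_init :: 'q
  pa_trans :: "('q \<times> 'a \<times> nat list \<times> 'q) set"
  pa_final :: "'q set"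
  pa_dim :: nat
  pa_constr :: "nat list set"

definition is_pa :: "'a set \<Rightarrow> ('q, 'a) pa \<Rightarrow> bool" where
  "is_pa \<Sigma> A \<longleftrightarrow> finite (pa_states A) \<and> pa_init A \<in> pa_states A \<and>
     pa_final A \<subseteq> pa_states A \<and> finite (pa_trans A) \<and>
     pa_trans A \<subseteq> pa_states A \<times> \<Sigma> \<times> {v. length v = pa_dim A} \<times> pa_states A \<and>
     semilinear (pa_dim A) (pa_constr A)"

definition vsum :: "nat \<Rightarrow> nat list list \<Rightarrow> nat list" where
  "vsum d vs = map (\<lambda>j. \<Sum>i<length vs. vs ! i ! j) [0..<d]"

definition pa_accepts :: "('q, 'a) pa \<Rightarrow> 'a list \<Rightarrow> bool" where
  "pa_accepts A w \<longleftrightarrow> (\<exists>(p :: nat \<Rightarrow> 'q) (vs :: nat list list).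
     p 0 = pa_init A \<and> length vs = length w \<and>
     (\<forall>i < length w. (p i, w ! i, vs ! i, p (Suc i)) \<in> pa_trans A) \<and>
     p (length w) \<in> pa_final A \<and> vsum (pa_dim A) vs \<in> pa_constr A)"

definition pa_lang :: "('q, 'a) pa \<Rightarrow> 'a list set" where
  "pa_lang A = {w. pa_accepts A w}"

definition parikh_recognizable :: "'a set \<Rightarrow> 'a list set \<Rightarrow> bool" where
  "parikh_recognizable \<Sigma> U \<longleftrightarrow> (\<exists>A :: (nat, 'a) pa. is_pa \<Sigma> A \<and> pa_lang A = U)"

definition regular :: "'a set \<Rightarrow> 'a list set \<Rightarrow> bool" where
  "regular \<Sigma> V \<longleftrightarrow> (\<exists>(Q :: nat set) q0 (\<delta> :: (nat \<times> 'a \<times> nat) set) F.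
     finite Q \<and> q0 \<in> Q \<and> F \<subseteq> Q \<and> \<delta> \<subseteq> Q \<times> \<Sigma> \<times> Q \<and>
     V = {w. \<exists>p :: nat \<Rightarrow> nat. p 0 = q0 \<and>
            (\<forall>i < length w. (p i, w ! i, p (Suc i)) \<in> \<delta>) \<and> p (length w) \<in> F})"

record ('q, 'a) lpba =
  lpba_states :: "'q set"
  lpba_init :: 'q
  lpba_trans :: "('q \<times> 'a \<times> nat list \<times> 'q) set"
  lpba_final :: "'q set"
  lpba_dim :: nat
  lpba_constr :: "enat list set"

definition is_lpba :: "'a set \<Rightarrow> ('q, 'a) lpba \<Rightarrow> bool" where
  "is_lpba \<Sigma> A \<longleftrightarrow> finite (lpba_states A) \<and> lpba_init A \<in> lpba_states A \<and>
     lpba_final A \<subseteq> lpba_states A \<and> finite (lpba_trans A) \<and>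
     lpba_trans A \<subseteq> lpba_states A \<times> \<Sigma> \<times> {v. length v = lpba_dim A} \<times> lpba_states A \<and>
     semilinear (lpba_dim A) (lpba_constr A)"

definition rho :: "nat \<Rightarrow> (nat \<Rightarrow> nat list) \<Rightarrow> enat list" where
  "rho d v = map (\<lambda>j. if infinite {i. v i ! j \<noteq> 0} then \<infinity>
                       else enat (\<Sum>i \<in> {i. v i ! j \<noteq> 0}. v i ! j)) [0..<d]"

definition lpba_accepts :: "('q, 'a) lpba \<Rightarrow> 'a word \<Rightarrow> bool" where
  "lpba_accepts A \<alpha> \<longleftrightarrow> (\<exists>(p :: nat \<Rightarrow> 'q) (v :: nat \<Rightarrow> nat list).
     p 0 = lpba_init A \<and>
     (\<forall>i. (p i, \<alpha> i, v i, p (Suc i)) \<in> lpba_trans A) \<and>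
     (\<exists>\<^sub>\<infinity>i. p i \<in> lpba_final A) \<and>
     rho (lpba_dim A) v \<in> lpba_constr A)"

definition lpba_lang :: "('q, 'a) lpba \<Rightarrow> 'a word set" where
  "lpba_lang A = {\<alpha>. lpba_accepts A \<alpha>}"

definition lpba_recognizable :: "'a set \<Rightarrow> 'a word set \<Rightarrow> bool" where
  "lpba_recognizable \<Sigma> L \<longleftrightarrow> (\<exists>A :: (nat, 'a) lpba. is_lpba \<Sigma> A \<and> lpba_lang A = L)"

text \<open>V^omega = { w1 w2 ... | w_i in V, w_i nonempty }: alpha is the infinite
  concatenation of ws iff every finite concatenation ws 0 ... ws (k-1) is a prefix.\<close>
definition omega_iter :: "'a list set \<Rightarrow> 'a word set" where
  "omega_iter V = {\<alpha>. \<exists>ws :: nat \<Rightarrow> 'a list. (\<forall>i. ws i \<in> V \<and> ws i \<noteq> []) \<and>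
      (\<forall>k. prefix (\<Sum>j<k. length (ws j)) \<alpha> = concat (map ws [0..<k]))}"

definition conc_lang :: "'a list set \<Rightarrow> 'a word set \<Rightarrow> 'a word set" where
  "conc_lang U W = {u \<frown> \<beta> | u \<beta>. u \<in> U \<and> \<beta> \<in> W}"

end

theory Submission
  imports Defs "HOL-Library.Countable"
begin


lemma lpba_rename:
  fixes B :: "('q::countable, 'a) lpba"
  assumes "is_lpba \<Sigma> B" "lpba_lang B = L"
  shows "lpba_recognizable \<Sigma> L"
proof -
  define f :: "'q \<Rightarrow> nat" where "f = to_nat"
  have inj: "inj f" unfolding f_def by simp
  define B' :: "(nat,'a) lpba" where "B' = \<lparr>lpba_states = f ` lpba_states B, lpba_init = f (lpba_init B),
     lpba_trans = (\<lambda>(p,a,v,q). (f p, a, v, f q)) ` lpba_trans B, lpba_final = f ` lpba_final B,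
     lpba_dim = lpba_dim B, lpba_constr = lpba_constr B\<rparr>"
  have "is_lpba \<Sigma> B'" using assms(1) unfolding is_lpba_def B'_def by (auto simp: image_subset_iff)
  moreover have "lpba_lang B' = L"
  proof -
    have "lpba_accepts B' \<alpha> \<longleftrightarrow> lpba_accepts B \<alpha>" for \<alpha>
    proof
      assume "lpba_accepts B \<alpha>"
      then obtain p v where r: "p 0 = lpba_init B" "\<forall>i. (p i, \<alpha> i, v i, p (Suc i)) \<in> lpba_trans B"
        "\<exists>\<^sub>\<infinity>i. p i \<in> lpba_final B" "rho (lpba_dim B) v \<in> lpba_constr B" unfolding lpba_accepts_def by blast
      have "\<exists>\<^sub>\<infinity>i. f (p i) \<in> lpba_final B'" using r(3) by (auto simp: B'_def elim!: INFM_mono)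
      with r show "lpba_accepts B' \<alpha>" unfolding lpba_accepts_def
        by (intro exI[of _ "f o p"] exI[of _ v]) (auto simp: B'_def intro!: image_eqI[where x="(p i, \<alpha> i, v i, p (Suc i))" for i])
    next
      assume "lpba_accepts B' \<alpha>"
      then obtain p v where r: "p 0 = lpba_init B'" "\<forall>i. (p i, \<alpha> i, v i, p (Suc i)) \<in> lpba_trans B'"
        "\<exists>\<^sub>\<infinity>i. p i \<in> lpba_final B'" "rho (lpba_dim B') v \<in> lpba_constr B'" unfolding lpba_accepts_def by blast
      define p' where "p' = inv f o p"
      have pi: "f (p' i) = p i" for i
      proof -
        from r(2) have "(p i, \<alpha> i, v i, p (Suc i)) \<in> lpba_trans B'" by blast
        then obtain x a w y where "(x,a,w,y) \<in> lpba_trans B" "p i = f x"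
          by (auto simp: B'_def)
        then show ?thesis by (simp add: p'_def inj)
      qed
      have "p' 0 = lpba_init B" using r(1) pi[of 0] inj by (simp add: B'_def inj_eq)
      moreover have "(p' i, \<alpha> i, v i, p' (Suc i)) \<in> lpba_trans B" for i
      proof -
        from r(2) obtain x y where "(x,\<alpha> i,v i,y) \<in> lpba_trans B" "p i = f x" "p (Suc i) = f y"
          by (fastforce simp: B'_def)
        then show ?thesis using pi[of i] pi[of "Suc i"] inj by (simp add: inj_eq)
      qed
      moreover have "\<exists>\<^sub>\<infinity>i. p' i \<in> lpba_final B" using r(3)
        by (elim INFM_mono) (metis (no_types, lifting) B'_def imageE inj injD lpba.select_convs(4) pi)
      ultimately show "lpba_accepts B \<alpha>" using r(4) unfolding lpba_accepts_def
        by (intro exI[of _ p'] exI[of _ v]) (auto simp: B'_def)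
    qed
    then show ?thesis using assms(2) by (auto simp: lpba_lang_def)
  qed
  ultimately show ?thesis unfolding lpba_recognizable_def by blast
qed

lemma rho_eventually_zero:
  assumes "\<And>t. t \<ge> K \<Longrightarrow> \<forall>j<d. v t ! j = 0"
  shows "rho d v = map (\<lambda>j. enat (\<Sum>t<K. v t ! j)) [0..<d]"
proof -
  have "j < d \<Longrightarrow> {t. v t ! j \<noteq> 0} \<subseteq> {..<K}" for j using assms not_less by blast
  moreover have "j < d \<Longrightarrow> (\<Sum>t\<in>{t. v t ! j \<noteq> 0}. v t ! j) = (\<Sum>t<K. v t ! j)" for j
    by (rule sum.mono_neutral_left) (use calculation in auto)
  ultimately show ?thesis unfolding rho_def
    by (auto intro!: map_cong) (meson finite_lessThan finite_subset)
qed



definition E :: "nat \<Rightarrow> nat \<Rightarrow> nat list \<Rightarrow> enat list" where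
  "E M c x = enat c # map enat x @ replicate (M - length x) 0"

lemma length_foldr_lin:
  assumes "length b0 = d" "\<forall>p\<in>set Ps. length p = d" "length zs = length Ps"
  shows "length (foldr vadd (map2 (\<lambda>z p. smult (of_nat z) p) zs Ps) b0) = d"
  using assms
proof (induction Ps arbitrary: zs)
  case Nil then show ?case by simp
next
  case (Cons p Ps)
  then obtain z zs' where "zs = z # zs'" by (cases zs) auto
  with Cons show ?case by (simp add: vadd_def smult_def)
qed

lemma E_smult: "smult (of_nat z) (E M 0 p) = E M 0 (smult (of_nat z) p)"
  by (simp add: E_def smult_def of_nat_eq_enat)

lemma E_vadd: "length x = length y \<Longrightarrow> vadd (E M 0 x) (E M c y) = E M c (vadd x y)"
  by (simp add: E_def vadd_def zip_append map_zip_map2 zip_map1 zip_map2 map2_map_map split: prod.splits)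

lemma foldr_E:
  assumes "length b0 = d" "\<forall>p\<in>set Ps. length p = d" "length zs = length Ps"
  shows "foldr vadd (map2 (\<lambda>z p. smult (of_nat z) p) zs (map (E M 0) Ps)) (E M c b0)
       = E M c (foldr vadd (map2 (\<lambda>z p. smult (of_nat z) p) zs Ps) b0)"
  using assms
proof (induction Ps arbitrary: zs)
  case Nil then show ?case by simp
next
  case (Cons p Ps)
  then obtain z zs' where zs: "zs = z # zs'" by (cases zs) auto
  have l: "length (foldr vadd (map2 (\<lambda>z p. smult (of_nat z) p) zs' Ps) b0) = d"
    using Cons zs by (intro length_foldr_lin) auto
  have "length (smult (of_nat z) p) = d" using Cons by (simp add: smult_def)
  with Cons zs l show ?case by (simp add: E_smult E_vadd)
qed

lemma lin_set_E:
  assumes "length b0 = d" "\<forall>p\<in>set Ps. length p = d"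
  shows "lin_set (E M c b0) (map (E M 0) Ps) = E M c ` lin_set b0 Ps"
  using foldr_E[OF assms] unfolding lin_set_def by (auto simp: image_iff) (metis length_map)+

lemma E_inj: "E M c x = E M c' y \<Longrightarrow> length x \<le> M \<Longrightarrow> length y = length x \<Longrightarrow> c = c' \<and> x = y"
  by (auto simp: E_def) (meson enat.inject list.inj_map_strong)



definition pad :: "nat \<Rightarrow> nat list \<Rightarrow> nat list" where
  "pad M x = x @ replicate (M - length x) 0"

definition Vf :: "nat \<Rightarrow> nat list list \<Rightarrow> nat \<Rightarrow> nat list" where
  "Vf M vs t = (if t < length vs then 0 # pad M (vs ! t) else replicate (Suc M) 0)"

definition markv :: "nat \<Rightarrow> (nat \<Rightarrow> nat list) \<Rightarrow> nat \<Rightarrow> nat list" where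
  "markv i v = v(0 := (v 0)[0 := i])"

lemma rho_Vf:
  assumes "\<forall>x\<in>set vs. length x = d" "d \<le> M"
  shows "rho (Suc M) (markv i (Vf M vs)) = E M i (vsum d vs)"
proof -
  have z: "\<forall>j<Suc M. markv i (Vf M vs) t ! j = 0" if "t \<ge> Suc (length vs)" for t
    using that by (auto simp: markv_def Vf_def nth_Cons split: nat.splits)
  have r: "rho (Suc M) (markv i (Vf M vs)) = map (\<lambda>j. enat (\<Sum>t<Suc (length vs). markv i (Vf M vs) t ! j)) [0..<Suc M]"
    by (rule rho_eventually_zero) (use z in auto)
  have lv: "length (vsum d vs) = d" by (simp add: vsum_def)
  show ?thesis unfolding r
  proof (rule nth_equalityI)
    show "length (map (\<lambda>j. enat (\<Sum>t<Suc (length vs). markv i (Vf M vs) t ! j)) [0..<Suc M]) = length (E M i (vsum d vs))"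
      using lv assms by (simp add: E_def)
  next
    fix j assume "j < length (map (\<lambda>j. enat (\<Sum>t<Suc (length vs). markv i (Vf M vs) t ! j)) [0..<Suc M])"
    then have j: "j < Suc M" by simp
    show "map (\<lambda>j. enat (\<Sum>t<Suc (length vs). markv i (Vf M vs) t ! j)) [0..<Suc M] ! j = E M i (vsum d vs) ! j"
    proof (cases j)
      case 0
      have "(\<Sum>t<Suc (length vs). markv i (Vf M vs) t ! 0) = (\<Sum>t\<in>{0}. markv i (Vf M vs) t ! 0)"
        by (rule sum.mono_neutral_right) (auto simp: markv_def Vf_def)
      also have "\<dots> = i" by (simp add: markv_def Vf_def)
      finally show ?thesis using 0 by (simp add: E_def del: upt_Suc)
    next
      case (Suc j')
      have "(\<Sum>t<Suc (length vs). markv i (Vf M vs) t ! j) = (\<Sum>t<Suc (length vs). Vf M vs t ! j)"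
        by (rule sum.cong) (auto simp: markv_def Vf_def Suc)
      also have "\<dots> = (\<Sum>t<length vs. Vf M vs t ! j)" using j by (simp add: Vf_def Suc)
      also have "\<dots> = (\<Sum>t<length vs. if j' < d then vs ! t ! j' else 0)"
        using assms j by (intro sum.cong) (auto simp: Vf_def Suc pad_def nth_append)
      finally show ?thesis using j assms Suc lv
        by (auto simp: E_def nth_append vsum_def zero_enat_def simp del: upt_Suc)
    qed
  qed
qed



datatype st = Init | Pst nat nat | Vst nat nat | Rst nat

instance st :: countable by countable_datatype

locale cons =
  fixes \<Sigma> :: "'a set" and I :: "nat set" and A :: "nat \<Rightarrow> (nat, 'a) pa"
    and Q :: "nat \<Rightarrow> nat set" and q0 :: "nat \<Rightarrow> nat" and \<delta> :: "nat \<Rightarrow> (nat \<times> 'a \<times> nat) set"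
    and F :: "nat \<Rightarrow> nat set"
  assumes finI: "finite I" and finS: "finite \<Sigma>"
    and pa: "\<And>i. i \<in> I \<Longrightarrow> is_pa \<Sigma> (A i)"
    and nfa: "\<And>i. i \<in> I \<Longrightarrow> finite (Q i) \<and> q0 i \<in> Q i \<and> F i \<subseteq> Q i \<and> \<delta> i \<subseteq> Q i \<times> \<Sigma> \<times> Q i"
begin

definition "M = (\<Sum>i\<in>I. pa_dim (A i))"

lemma dim_le: "i \<in> I \<Longrightarrow> pa_dim (A i) \<le> M"
  unfolding M_def using finI by (intro member_le_sum) auto

definition "stands i X q \<longleftrightarrow> X = Vst i q \<or> (q = q0 i \<and> (X = Rst i \<or> (\<exists>p\<in>pa_final (A i). X = Pst i p)))"

definition "Ttr i = {(Pst i p, a, 0 # pad M w, Pst i q) | p a w q. (p,a,w,q) \<in> pa_trans (A i)}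
  \<union> {(X, a, replicate (Suc M) 0, Vst i q') | X q a q'. stands i X q \<and> (q,a,q') \<in> \<delta> i}
  \<union> {(X, a, replicate (Suc M) 0, Rst i) | X q a q'. stands i X q \<and> (q,a,q') \<in> \<delta> i \<and> q' \<in> F i}"

definition "Tinit i = {(Init, a, x[0:=i], Y) | a x Y. (Pst i (pa_init (A i)), a, x, Y) \<in> Ttr i}"

definition "Sts = insert Init (\<Union>i\<in>I. Pst i ` pa_states (A i) \<union> Vst i ` Q i \<union> {Rst i})"

definition Aut :: "(st, 'a) lpba" where
  "Aut = \<lparr>lpba_states = Sts, lpba_init = Init, lpba_trans = (\<Union>i\<in>I. Ttr i \<union> Tinit i),
     lpba_final = Rst ` I, lpba_dim = Suc M, lpba_constr = (\<Union>i\<in>I. E M i ` pa_constr (A i))\<rparr>"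

lemma finite_Sts: "finite Sts"
  unfolding Sts_def using finI pa nfa by (auto simp: is_pa_def)

lemma Ttr_sub: "i \<in> I \<Longrightarrow> Ttr i \<subseteq> Sts \<times> \<Sigma> \<times> {v. length v = Suc M} \<times> Sts"
proof -
  assume i: "i \<in> I"
  have paT: "pa_trans (A i) \<subseteq> pa_states (A i) \<times> \<Sigma> \<times> {v. length v = pa_dim (A i)} \<times> pa_states (A i)"
    and paF: "pa_final (A i) \<subseteq> pa_states (A i)"
    using pa[OF i] by (auto simp: is_pa_def)
  have d: "pa_dim (A i) \<le> M" using dim_le[OF i] .
  have st: "stands i X q \<Longrightarrow> q \<in> Q i \<Longrightarrow> X \<in> Sts" for X q
    using i paF nfa[OF i] by (auto simp: stands_def Sts_def) blast
  show ?thesis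
  proof
    fix t assume "t \<in> Ttr i"
    then show "t \<in> Sts \<times> \<Sigma> \<times> {v. length v = Suc M} \<times> Sts"
      unfolding Ttr_def
    proof (elim UnE)
      assume "t \<in> {(Pst i p, a, 0 # pad M w, Pst i q) | p a w q. (p,a,w,q) \<in> pa_trans (A i)}"
      then show ?thesis using paT d i by (auto simp: Sts_def pad_def)
    next
      assume "t \<in> {(X, a, replicate (Suc M) 0, Vst i q') | X q a q'. stands i X q \<and> (q,a,q') \<in> \<delta> i}"
      then obtain X q a q' where t: "t = (X,a,replicate (Suc M) 0,Vst i q')" "stands i X q" "(q,a,q') \<in> \<delta> i" by blast
      then have "q \<in> Q i" "q' \<in> Q i" "a \<in> \<Sigma>" using nfa[OF i] by auto
      moreover have "Vst i q' \<in> Sts" using i \<open>q' \<in> Q i\<close> by (auto simp: Sts_def)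
      ultimately show ?thesis using st[of X q] t by simp
    next
      assume "t \<in> {(X, a, replicate (Suc M) 0, Rst i) | X q a q'. stands i X q \<and> (q,a,q') \<in> \<delta> i \<and> q' \<in> F i}"
      then obtain X q a q' where t: "t = (X,a,replicate (Suc M) 0,Rst i)" "stands i X q" "(q,a,q') \<in> \<delta> i" by blast
      then have "q \<in> Q i" "a \<in> \<Sigma>" using nfa[OF i] by auto
      moreover have "Rst i \<in> Sts" using i by (auto simp: Sts_def)
      ultimately show ?thesis using st[of X q] t by simp
    qed
  qed
qed

lemma Ttr_fin: "i \<in> I \<Longrightarrow> finite (Ttr i)"
proof -
  assume i: "i \<in> I"
  have "Ttr i \<subseteq> (\<lambda>(p,a,w,q). (Pst i p, a, 0 # pad M w, Pst i q)) ` pa_trans (A i) \<union> Sts \<times> \<Sigma> \<times> {replicate (Suc M) 0} \<times> Sts"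
  proof
    fix t assume t: "t \<in> Ttr i"
    then have t2: "t \<in> Sts \<times> \<Sigma> \<times> {v. length v = Suc M} \<times> Sts" using Ttr_sub[OF i] by blast
    from t show "t \<in> (\<lambda>(p,a,w,q). (Pst i p, a, 0 # pad M w, Pst i q)) ` pa_trans (A i) \<union> Sts \<times> \<Sigma> \<times> {replicate (Suc M) 0} \<times> Sts"
      unfolding Ttr_def
    proof (elim UnE)
      assume "t \<in> {(Pst i p, a, 0 # pad M w, Pst i q) | p a w q. (p,a,w,q) \<in> pa_trans (A i)}"
      then show ?thesis by (auto simp: image_iff)
    qed (use t2 in auto)
  qed
  moreover have "finite (pa_trans (A i))" using pa[OF i] by (simp add: is_pa_def)
  ultimately show ?thesis using finite_Sts finS by (auto intro: finite_subset)
qed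

lemma Tinit_img: "Tinit i = (\<lambda>(X,a,x,Y). (Init, a, x[0:=i], Y)) ` {t \<in> Ttr i. fst t = Pst i (pa_init (A i))}"
  unfolding Tinit_def by (auto simp: image_iff)

lemma Tinit_sub: "i \<in> I \<Longrightarrow> Tinit i \<subseteq> Sts \<times> \<Sigma> \<times> {v. length v = Suc M} \<times> Sts"
proof
  fix t assume i: "i \<in> I" and "t \<in> Tinit i"
  then obtain a x Y where t: "t = (Init, a, x[0:=i], Y)" "(Pst i (pa_init (A i)), a, x, Y) \<in> Ttr i"
    unfolding Tinit_def by blast
  then have "a \<in> \<Sigma>" "length x = Suc M" "Y \<in> Sts" using Ttr_sub[OF i] by auto
  moreover have "Init \<in> Sts" by (simp add: Sts_def)
  ultimately show "t \<in> Sts \<times> \<Sigma> \<times> {v. length v = Suc M} \<times> Sts" using t by simp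
qed

lemma semilin: "semilinear (Suc M) (\<Union>i\<in>I. E M i ` pa_constr (A i))"
proof -
  have "\<forall>i\<in>I. \<exists>B. finite B \<and> (\<forall>(b0, Ps) \<in> B. length b0 = pa_dim (A i) \<and> (\<forall>p \<in> set Ps. length p = pa_dim (A i))) \<and>
      pa_constr (A i) = (\<Union>(b0, Ps) \<in> B. lin_set b0 Ps)"
    using pa by (auto simp: is_pa_def semilinear_def)
  from bchoice[OF this] obtain B where B0: "\<forall>i\<in>I. finite (B i) \<and> (\<forall>(b0, Ps) \<in> B i. length b0 = pa_dim (A i) \<and> (\<forall>p \<in> set Ps. length p = pa_dim (A i))) \<and>
      pa_constr (A i) = (\<Union>(b0, Ps) \<in> B i. lin_set b0 Ps)" by blast
  have B: "finite (B i) \<and> (\<forall>(b0, Ps) \<in> B i. length b0 = pa_dim (A i) \<and> (\<forall>p \<in> set Ps. length p = pa_dim (A i))) \<and>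
      pa_constr (A i) = (\<Union>(b0, Ps) \<in> B i. lin_set b0 Ps)" if "i \<in> I" for i using B0 that by blast
  define BB where "BB = (\<Union>i\<in>I. (\<lambda>(b0,Ps). (E M i b0, map (E M 0) Ps)) ` B i)"
  have "finite BB" unfolding BB_def using finI B by blast
  moreover have "\<forall>(b0, Ps) \<in> BB. length b0 = Suc M \<and> (\<forall>p \<in> set Ps. length p = Suc M)"
  proof (clarify)
    fix b0 Ps assume "(b0, Ps) \<in> BB"
    then obtain i c0 Cs where i: "i \<in> I" "(c0, Cs) \<in> B i" "b0 = E M i c0" "Ps = map (E M 0) Cs"
      unfolding BB_def by auto
    then have "length c0 \<le> M" "\<forall>p\<in>set Cs. length p \<le> M" using B[OF i(1)] dim_le[OF i(1)] by auto
    then show "length b0 = Suc M \<and> (\<forall>p \<in> set Ps. length p = Suc M)"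
      using i by (auto simp: E_def)
  qed
  moreover have "(\<Union>i\<in>I. E M i ` pa_constr (A i)) = (\<Union>(b0, Ps) \<in> BB. lin_set b0 Ps)"
  proof -
    have "E M i ` pa_constr (A i) = (\<Union>x \<in> B i. lin_set (E M i (fst x)) (map (E M 0) (snd x)))" if i: "i \<in> I" for i
    proof -
      have "E M i ` pa_constr (A i) = E M i ` (\<Union>x \<in> B i. lin_set (fst x) (snd x))"
        using B[OF i] by (simp add: case_prod_beta)
      also have "\<dots> = (\<Union>x \<in> B i. E M i ` lin_set (fst x) (snd x))" by (rule image_UN)
      also have "\<dots> = (\<Union>x \<in> B i. lin_set (E M i (fst x)) (map (E M 0) (snd x)))"
      proof (rule SUP_cong[OF refl])
        fix x assume "x \<in> B i"
        then have "length (fst x) = pa_dim (A i)" "\<forall>p\<in>set (snd x). length p = pa_dim (A i)"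
          using B[OF i] by auto
        then show "E M i ` lin_set (fst x) (snd x) = lin_set (E M i (fst x)) (map (E M 0) (snd x))"
          by (rule lin_set_E[symmetric])
      qed
      finally show ?thesis .
    qed
    then have "(\<Union>i\<in>I. E M i ` pa_constr (A i)) = (\<Union>i\<in>I. \<Union>x \<in> B i. lin_set (E M i (fst x)) (map (E M 0) (snd x)))"
      by (rule SUP_cong[OF refl])
    also have "\<dots> = (\<Union>(b0, Ps) \<in> BB. lin_set b0 Ps)"
      unfolding BB_def by (simp add: case_prod_beta UN_UN_flatten)
    finally show ?thesis .
  qed
  ultimately show ?thesis unfolding semilinear_def by blast
qed

lemma is_lpba_Aut: "is_lpba \<Sigma> Aut"
proof -
  have "finite (Tinit i)" if "i \<in> I" for i unfolding Tinit_img using Ttr_fin[OF that] by simp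
  then have "finite (\<Union>i\<in>I. Ttr i \<union> Tinit i)" using finI Ttr_fin by blast
  moreover have "(\<Union>i\<in>I. Ttr i \<union> Tinit i) \<subseteq> Sts \<times> \<Sigma> \<times> {v. length v = Suc M} \<times> Sts"
    using Ttr_sub Tinit_sub by blast
  moreover have "Init \<in> Sts" "Rst ` I \<subseteq> Sts" by (auto simp: Sts_def)
  ultimately show ?thesis unfolding is_lpba_def Aut_def using finite_Sts semilin by simp
qed

end


lemma seg_exists:
  fixes s :: "nat \<Rightarrow> nat"
  assumes "s 0 = 0" "\<And>k. s k < s (Suc k)"
  shows "\<exists>k. s k \<le> t \<and> t < s (Suc k)"
proof (induction t)
  case 0 then show ?case using assms(1) assms(2)[of 0] by (intro exI[of _ 0]) auto
next
  case (Suc t)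
  then obtain k where k: "s k \<le> t" "t < s (Suc k)" by blast
  show ?case
  proof (cases "Suc t < s (Suc k)")
    case True then show ?thesis using k by (intro exI[of _ k]) auto
  next
    case False then have "Suc t = s (Suc k)" using k by simp
    then show ?thesis using assms(2)[of "Suc k"] by (intro exI[of _ "Suc k"]) auto
  qed
qed

lemma seg_unique:
  fixes s :: "nat \<Rightarrow> nat"
  assumes "\<And>k. s k < s (Suc k)" "s k \<le> t" "t < s (Suc k)" "s k' \<le> t" "t < s (Suc k')"
  shows "k = k'"
proof -
  have sm: "strict_mono s" using assms(1) by (simp add: strict_mono_Suc_iff)
  have "\<not> k < k'"
  proof
    assume "k < k'" then have "Suc k \<le> k'" by simp
    then have "s (Suc k) \<le> s k'" using sm by (simp add: strict_mono_less_eq)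
    then show False using assms by simp
  qed
  moreover have "\<not> k' < k"
  proof
    assume "k' < k" then have "Suc k' \<le> k" by simp
    then have "s (Suc k') \<le> s k" using sm by (simp add: strict_mono_less_eq)
    then show False using assms by simp
  qed
  ultimately show ?thesis by simp
qed

context cons begin

definition "nfa_lang i = {w. \<exists>p. p 0 = q0 i \<and> (\<forall>k<length w. (p k, w ! k, p (Suc k)) \<in> \<delta> i) \<and> p (length w) \<in> F i}"

lemma run_exists:
  assumes i: "i \<in> I" and u: "pa_accepts (A i) u" and \<beta>: "\<beta> \<in> omega_iter (nfa_lang i)"
  shows "\<exists>p vs. p 0 = Pst i (pa_init (A i)) \<and> (\<forall>t. (p t, (u \<frown> \<beta>) t, Vf M vs t, p (Suc t)) \<in> Ttr i)
    \<and> (\<exists>\<^sub>\<infinity>t. p t = Rst i) \<and> vsum (pa_dim (A i)) vs \<in> pa_constr (A i)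
    \<and> (\<forall>x\<in>set vs. length x = pa_dim (A i))"
proof -
  obtain pp vs where pp: "pp 0 = pa_init (A i)" "length vs = length u"
    "\<forall>k<length u. (pp k, u ! k, vs ! k, pp (Suc k)) \<in> pa_trans (A i)"
    "pp (length u) \<in> pa_final (A i)" "vsum (pa_dim (A i)) vs \<in> pa_constr (A i)"
    using u unfolding pa_accepts_def by blast
  have paT: "pa_trans (A i) \<subseteq> pa_states (A i) \<times> \<Sigma> \<times> {v. length v = pa_dim (A i)} \<times> pa_states (A i)"
    using pa[OF i] by (auto simp: is_pa_def)
  have lens: "\<forall>x\<in>set vs. length x = pa_dim (A i)"
  proof
    fix x assume "x \<in> set vs"
    then obtain k where "k < length vs" "x = vs ! k" by (auto simp: in_set_conv_nth)
    then show "length x = pa_dim (A i)" using pp(2,3) paT by auto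
  qed
  obtain ws where ws: "\<And>k. ws k \<in> nfa_lang i" "\<And>k. ws k \<noteq> []"
    "\<And>k. prefix (\<Sum>j<k. length (ws j)) \<beta> = concat (map ws [0..<k])"
    using \<beta> unfolding omega_iter_def by blast
  define S where "S k = (\<Sum>j<k. length (ws j))" for k
  have S0: "S 0 = 0" and SSuc: "\<And>k. S (Suc k) = S k + length (ws k)" by (simp_all add: S_def)
  have Smono: "\<And>k. S k < S (Suc k)" using ws(2) SSuc by simp
  have "\<forall>k. \<exists>r. r 0 = q0 i \<and> (\<forall>c<length (ws k). (r c, ws k ! c, r (Suc c)) \<in> \<delta> i) \<and> r (length (ws k)) \<in> F i"
    using ws(1) unfolding nfa_lang_def by blast
  then obtain r where r: "\<And>k. r k 0 = q0 i" "\<And>k c. c < length (ws k) \<Longrightarrow> (r k c, ws k ! c, r k (Suc c)) \<in> \<delta> i"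
    "\<And>k. r k (length (ws k)) \<in> F i" by metis
  define seg where "seg t = (SOME k. S k \<le> t \<and> t < S (Suc k))" for t
  define off where "off t = t - S (seg t)" for t
  have seg: "S (seg t) \<le> t \<and> t < S (Suc (seg t))" for t
    unfolding seg_def by (rule someI_ex) (rule seg_exists[OF S0 Smono])
  have seg_eq: "S k \<le> t \<Longrightarrow> t < S (Suc k) \<Longrightarrow> seg t = k" for k t
    using seg_unique[of S, OF Smono] seg by blast
  have off_lt: "off t < length (ws (seg t))" for t using seg[of t] SSuc[of "seg t"] unfolding off_def by linarith
  have lenc: "length (concat (map ws [0..<k])) = S k" for k
    by (simp add: S_def length_concat sum_set_upt_conv_sum_list_nat[symmetric] atLeast0LessThan comp_def)
  have \<beta>t: "\<beta> t = ws (seg t) ! off t" for t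
  proof -
    let ?k = "seg t"
    have "prefix (S (Suc ?k)) \<beta> = concat (map ws [0..<?k]) @ ws ?k" using ws(3)[of "Suc ?k"] by (simp add: S_def)
    moreover have "t < S (Suc ?k) - 0" using seg[of t] by simp
    ultimately have "\<beta> t = (concat (map ws [0..<?k]) @ ws ?k) ! t" using subsequence_nth[of t "S (Suc ?k)" 0 \<beta>] by simp
    also have "\<dots> = ws ?k ! off t" using seg[of t] lenc[of ?k] by (simp add: nth_append off_def)
    finally show ?thesis .
  qed
  define bst where "bst t' = (if off t' = 0 then Rst i else Vst i (r (seg t') (off t')))" for t'
  define p where "p t = (if t \<le> length u then Pst i (pp t) else bst (t - length u))" for t
  have trans: "(p t, (u \<frown> \<beta>) t, Vf M vs t, p (Suc t)) \<in> Ttr i" for t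
  proof (cases "t < length u")
    case True
    then show ?thesis using pp(2,3) by (auto simp: p_def Vf_def Ttr_def)
  next
    case False
    define t' where "t' = t - length u"
    define k where "k = seg t'"
    define c where "c = off t'"
    have word: "(u \<frown> \<beta>) t = ws k ! c" using False \<beta>t by (simp add: t'_def k_def c_def)
    have vec: "Vf M vs t = replicate (Suc M) 0" using False pp(2) by (simp add: Vf_def)
    have ol: "c < length (ws k)" using off_lt by (simp add: k_def c_def)
    have d: "(r k c, ws k ! c, r k (Suc c)) \<in> \<delta> i" using r(2)[OF ol] .
    have src: "stands i (p t) (r k c)"
    proof (cases "t' = 0")
      case True
      then have "seg t' = 0" using seg_eq[of 0 t'] S0 Smono[of 0] by simp
      then have "k = 0" "c = 0" using True by (simp_all add: k_def c_def off_def S0)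
      then show ?thesis using True False pp(4) r(1) by (auto simp: stands_def p_def t'_def)
    next
      case False': False
      then show ?thesis using False r(1) by (auto simp: stands_def p_def t'_def bst_def k_def c_def)
    qed
    show ?thesis
    proof (cases "Suc c < length (ws k)")
      case True
      have "S k \<le> Suc t'" "Suc t' < S (Suc k)" using seg[of t'] True SSuc[of k]
        by (auto simp: k_def c_def off_def)
      then have "seg (Suc t') = k" by (rule seg_eq)
      then have "off (Suc t') = Suc c" using seg[of t'] by (simp add: off_def c_def k_def Suc_diff_le)
      then have "p (Suc t) = Vst i (r k (Suc c))" using False \<open>seg (Suc t') = k\<close>
        by (simp add: p_def bst_def t'_def Suc_diff_le)
      then show ?thesis using word vec src d unfolding Ttr_def by blast
    next
      case False'': False
      then have eq: "Suc c = length (ws k)" using ol by simp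
      have "Suc t' = S (Suc k)" using seg[of t'] SSuc[of k] eq unfolding k_def c_def off_def by linarith
      then have "seg (Suc t') = Suc k" using seg_eq[of "Suc k" "Suc t'"] Smono[of "Suc k"] by simp
      then have "off (Suc t') = 0" using \<open>Suc t' = S (Suc k)\<close> by (simp add: off_def)
      then have "p (Suc t) = Rst i" using False by (simp add: p_def bst_def t'_def Suc_diff_le)
      moreover have "r k (Suc c) \<in> F i" using r(3) eq by simp
      ultimately show ?thesis using word vec src d unfolding Ttr_def by blast
    qed
  qed
  have inf: "\<exists>\<^sub>\<infinity>t. p t = Rst i"
    unfolding INFM_nat
  proof
    fix m
    have sm: "strict_mono S" using Smono by (simp add: strict_mono_Suc_iff)
    have ge: "Suc m \<le> S (Suc m)" using strict_mono_imp_increasing[OF sm] .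
    have "seg (S (Suc m)) = Suc m" using seg_eq[of "Suc m" "S (Suc m)"] Smono[of "Suc m"] by simp
    then have "off (S (Suc m)) = 0" by (simp add: off_def)
    then have "p (length u + S (Suc m)) = Rst i" using ge by (simp add: p_def bst_def)
    moreover have "length u + S (Suc m) > m" using ge by simp
    ultimately show "\<exists>n>m. p n = Rst i" by blast
  qed
  have "p 0 = Pst i (pa_init (A i))" using pp(1) by (simp add: p_def)
  then show ?thesis using trans inf pp(5) lens by blast
qed

end


fun pst :: "st \<Rightarrow> nat" where "pst (Pst j q) = q" | "pst _ = 0"

definition isP :: "st \<Rightarrow> bool" where "isP X \<longleftrightarrow> (\<exists>j q. X = Pst j q)"

lemma subseq_split: "a \<le> b \<Longrightarrow> b \<le> c \<Longrightarrow> w [a \<rightarrow> c] = w [a \<rightarrow> b] @ w [b \<rightarrow> c]"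
  unfolding subsequence_def using upt_add_eq_append[of a b "c - b"] by simp

context cons begin

lemma Ttr_P: "(X,a,w,Y) \<in> Ttr i \<Longrightarrow> isP Y \<Longrightarrow>
  \<exists>p w' q. X = Pst i p \<and> Y = Pst i q \<and> w = 0 # pad M w' \<and> (p,a,w',q) \<in> pa_trans (A i)"
  unfolding Ttr_def isP_def by auto

lemma Ttr_nP: "(X,a,w,Y) \<in> Ttr i \<Longrightarrow> \<not> isP Y \<Longrightarrow>
  w = replicate (Suc M) 0 \<and> (\<exists>q q'. stands i X q \<and> (q,a,q') \<in> \<delta> i \<and> (Y = Vst i q' \<or> (Y = Rst i \<and> q' \<in> F i)))"
  unfolding Ttr_def isP_def by auto

lemma Ttr_src: "(X,a,w,Y) \<in> Ttr i \<Longrightarrow> \<not> isP X \<Longrightarrow> \<not> isP Y"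
  unfolding Ttr_def isP_def by auto

lemma stands_V: "stands i (Vst j x) q \<Longrightarrow> q = x"
  unfolding stands_def by auto

lemma stands_nV: "stands i X q \<Longrightarrow> \<forall>x. X \<noteq> Vst i x \<Longrightarrow> q = q0 i"
  unfolding stands_def by auto

lemma run_decomp:
  assumes i: "i \<in> I" and p0: "p 0 = Pst i (pa_init (A i))"
    and run: "\<And>t. (p t, \<alpha> t, v t, p (Suc t)) \<in> Ttr i"
    and inf: "\<exists>\<^sub>\<infinity>t. p t = Rst i"
  shows "\<exists>vs. v = Vf M vs \<and> (\<forall>x\<in>set vs. length x = pa_dim (A i))
     \<and> (\<exists>pp. pp 0 = pa_init (A i) \<and> (\<forall>k<length vs. (pp k, \<alpha> k, vs ! k, pp (Suc k)) \<in> pa_trans (A i))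
            \<and> pp (length vs) \<in> pa_final (A i))
     \<and> suffix (length vs) \<alpha> \<in> omega_iter (nfa_lang i)"
proof -
  have paT: "pa_trans (A i) \<subseteq> pa_states (A i) \<times> \<Sigma> \<times> {v. length v = pa_dim (A i)} \<times> pa_states (A i)"
    using pa[OF i] by (auto simp: is_pa_def)
  have exR: "\<exists>t. \<not> isP (p t)"
  proof -
    obtain t where "p t = Rst i" using inf unfolding INFM_nat by blast
    then show ?thesis by (intro exI[of _ t]) (simp add: isP_def)
  qed
  define N where "N = (LEAST t. \<not> isP (p t))"
  have N: "\<not> isP (p N)" unfolding N_def by (rule LeastI_ex[OF exR])
  have bef: "t < N \<Longrightarrow> isP (p t)" for t unfolding N_def using not_less_Least by blast
  have N0: "N > 0" using N p0 by (cases N) (auto simp: isP_def)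
  have aft: "t \<ge> N \<Longrightarrow> \<not> isP (p t)" for t
  proof (induction t rule: dec_induct)
    case base then show ?case using N .
  next
    case (step t) then show ?case using Ttr_src[OF run[of t]] by blast
  qed
  define n where "n = N - 1"
  have nN: "Suc n = N" using N0 by (simp add: n_def)
  define pp where "pp t = pst (p t)" for t
  define w where "w t = take (pa_dim (A i)) (tl (v t))" for t
  define vs where "vs = map w [0..<n]"
  have lvs: "length vs = n" by (simp add: vs_def)
  have Pt: "t < n \<Longrightarrow> p t = Pst i (pp t) \<and> p (Suc t) = Pst i (pp (Suc t)) \<and> v t = 0 # pad M (w t) \<and>
     length (w t) = pa_dim (A i) \<and> (pp t, \<alpha> t, w t, pp (Suc t)) \<in> pa_trans (A i)" for t
  proof -
    assume "t < n"
    then have "isP (p (Suc t))" using bef nN by simp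
    from Ttr_P[OF run[of t] this] obtain p' w' q where
      h: "p t = Pst i p'" "p (Suc t) = Pst i q" "v t = 0 # pad M w'" "(p', \<alpha> t, w', q) \<in> pa_trans (A i)" by blast
    then have "length w' = pa_dim (A i)" using paT by auto
    then have "w t = w'" using h(3) by (simp add: w_def pad_def)
    then show ?thesis using h \<open>length w' = pa_dim (A i)\<close> by (simp add: pp_def)
  qed
  have pn: "p n = Pst i (pp n)"
  proof (cases n)
    case 0 then show ?thesis using p0 by (simp add: pp_def)
  next
    case (Suc m) then show ?thesis using Pt[of m] by simp
  qed
  have afterV: "t \<ge> n \<Longrightarrow> v t = replicate (Suc M) 0 \<and> (\<exists>q q'. stands i (p t) q \<and> (q,\<alpha> t,q') \<in> \<delta> i \<and> (p (Suc t) = Vst i q' \<or> (p (Suc t) = Rst i \<and> q' \<in> F i)))" for t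
    using Ttr_nP[OF run[of t]] aft[of "Suc t"] nN by simp
  have vV: "v = Vf M vs"
  proof
    fix t show "v t = Vf M vs t"
    proof (cases "t < n")
      case True then show ?thesis using Pt[of t] by (simp add: Vf_def vs_def lvs)
    next
      case False then show ?thesis using afterV[of t] by (simp add: Vf_def lvs)
    qed
  qed
  have lens: "\<forall>x\<in>set vs. length x = pa_dim (A i)" using Pt by (auto simp: vs_def)
  have ppfin: "pp n \<in> pa_final (A i)"
  proof -
    from afterV[of n] obtain q where "stands i (p n) q" by auto
    then show ?thesis using pn by (auto simp: stands_def)
  qed
  have pprun: "\<forall>k<length vs. (pp k, \<alpha> k, vs ! k, pp (Suc k)) \<in> pa_trans (A i)"
    using Pt by (simp add: lvs vs_def)
  have pp0: "pp 0 = pa_init (A i)" using p0 by (simp add: pp_def)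
  have "\<forall>t. \<exists>qq. n \<le> t \<longrightarrow> stands i (p t) (fst qq) \<and> (fst qq,\<alpha> t,snd qq) \<in> \<delta> i \<and> (p (Suc t) = Vst i (snd qq) \<or> (p (Suc t) = Rst i \<and> snd qq \<in> F i))"
    using afterV by fastforce
  then obtain QQ where QQ: "\<And>t. n \<le> t \<Longrightarrow> stands i (p t) (fst (QQ t)) \<and> (fst (QQ t),\<alpha> t,snd (QQ t)) \<in> \<delta> i \<and> (p (Suc t) = Vst i (snd (QQ t)) \<or> (p (Suc t) = Rst i \<and> snd (QQ t) \<in> F i))"
    by metis
  define nx where "nx x = (LEAST t. x < t \<and> p t = Rst i)" for x
  have nx: "x < nx x \<and> p (nx x) = Rst i" for x
  proof -
    have "\<exists>t. x < t \<and> p t = Rst i" using inf unfolding INFM_nat by blast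
    then show ?thesis unfolding nx_def by (rule LeastI_ex)
  qed
  have nx_min: "x < t \<Longrightarrow> t < nx x \<Longrightarrow> p t \<noteq> Rst i" for x t
    unfolding nx_def using not_less_Least by blast
  define g where "g = rec_nat n (\<lambda>_ x. nx x)"
  have g0: "g 0 = n" and gS: "g (Suc k) = nx (g k)" for k by (simp_all add: g_def)
  have gmono: "g k < g (Suc k)" for k using nx gS by simp
  have gR: "p (g (Suc k)) = Rst i" for k using nx gS by simp
  have gge: "n \<le> g k" for k
  proof (induction k)
    case 0 then show ?case by (simp add: g0)
  next
    case (Suc k) then show ?case using gmono[of k] by simp
  qed
  have gst: "\<forall>x. p (g k) \<noteq> Vst i x" for k
    by (cases k) (auto simp: g0 gR pn)
  define ws where "ws k = \<alpha> [g k \<rightarrow> g (Suc k)]" for k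
  have wsne: "ws k \<noteq> []" for k using gmono[of k] by (simp add: ws_def)
  have wsL: "ws k \<in> nfa_lang i" for k
  proof -
    define L where "L = g (Suc k) - g k"
    have lw: "length (ws k) = L" by (simp add: ws_def L_def)
    have L0: "L > 0" using gmono[of k] by (simp add: L_def)
    define r where "r c = (if c = 0 then q0 i else snd (QQ (g k + c - 1)))" for c
    have rc: "fst (QQ (g k + c)) = r c" if "c < L" for c
    proof (cases c)
      case 0
      have "stands i (p (g k)) (fst (QQ (g k)))" using QQ[OF gge[of k]] by simp
      then show ?thesis using stands_nV gst[of k] 0 by (simp add: r_def)
    next
      case (Suc c')
      have t1: "n \<le> g k + c'" using gge[of k] by simp
      have "p (g k + c) \<noteq> Rst i" using that Suc gmono[of k] nx_min[of "g k" "g k + c"] by (simp add: gS L_def)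
      then have "p (g k + c) = Vst i (snd (QQ (g k + c')))" using QQ[OF t1] Suc by auto
      moreover have "stands i (p (g k + c)) (fst (QQ (g k + c)))" using QQ[of "g k + c"] gge[of k] by simp
      ultimately show ?thesis using stands_V Suc by (simp add: r_def)
    qed
    have "(r c, ws k ! c, r (Suc c)) \<in> \<delta> i" if "c < length (ws k)" for c
    proof -
      have "ws k ! c = \<alpha> (g k + c)" using that by (simp add: ws_def)
      moreover have "r (Suc c) = snd (QQ (g k + c))" by (simp add: r_def)
      ultimately show ?thesis using QQ[of "g k + c"] gge[of k] rc[of c] that lw by simp
    qed
    moreover have "r L \<in> F i"
    proof -
      have e: "g k + L - 1 + 1 = g (Suc k)" "n \<le> g k + L - 1" using gmono[of k] gge[of k] by (auto simp: L_def)
      then have "p (Suc (g k + L - 1)) = Rst i" using gR[of k] by simp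
      then show ?thesis using QQ[OF e(2)] L0 by (auto simp: r_def)
    qed
    ultimately show ?thesis unfolding nfa_lang_def using lw by (intro CollectI exI[of _ r]) (simp add: r_def)
  qed
  have sumlen: "(\<Sum>j<k. length (ws j)) = g k - n" for k
  proof (induction k)
    case 0 then show ?case by (simp add: g0)
  next
    case (Suc k) then show ?case using gmono[of k] gge[of k] by (simp add: ws_def)
  qed
  have cc: "concat (map ws [0..<k]) = \<alpha> [n \<rightarrow> g k]" for k
  proof (induction k)
    case 0 then show ?case by (simp add: g0)
  next
    case (Suc k)
    have "\<alpha> [n \<rightarrow> g (Suc k)] = \<alpha> [n \<rightarrow> g k] @ \<alpha> [g k \<rightarrow> g (Suc k)]"
      using gge[of k] gmono[of k] by (intro subseq_split) auto
    then show ?case using Suc by (simp add: ws_def)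
  qed
  have "suffix n \<alpha> \<in> omega_iter (nfa_lang i)"
    unfolding omega_iter_def
  proof (intro CollectI exI[of _ ws] conjI allI)
    fix k
    show "ws k \<in> nfa_lang i" "ws k \<noteq> []" using wsL wsne by auto
    show "prefix (\<Sum>j<k. length (ws j)) (suffix n \<alpha>) = concat (map ws [0..<k])"
      unfolding sumlen cc subsequence_prefix_suffix ..
  qed
  then show ?thesis using vV lens pp0 pprun ppfin lvs by blast
qed

end


fun stcomp :: "st \<Rightarrow> nat" where
  "stcomp Init = 0" | "stcomp (Pst j _) = j" | "stcomp (Vst j _) = j" | "stcomp (Rst j) = j"

lemma semilinear_len: "semilinear d C \<Longrightarrow> x \<in> C \<Longrightarrow> length x = d"
  unfolding semilinear_def lin_set_def using length_foldr_lin by fastforce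

context cons begin

lemma Ttr_comp: "(X,a,w,Y) \<in> Ttr j \<Longrightarrow> X \<noteq> Init \<and> stcomp X = j \<and> stcomp Y = j \<and> Y \<noteq> Init"
  unfolding Ttr_def stands_def by auto

lemma Tinit_src: "(X,a,w,Y) \<in> Tinit j \<Longrightarrow> X = Init"
  unfolding Tinit_def by auto

lemma lang_sup:
  assumes i: "i \<in> I" and u: "u \<in> pa_lang (A i)" and \<beta>: "\<beta> \<in> omega_iter (nfa_lang i)"
  shows "lpba_accepts Aut (u \<frown> \<beta>)"
proof -
  obtain p vs where r: "p 0 = Pst i (pa_init (A i))" "\<And>t. (p t, (u \<frown> \<beta>) t, Vf M vs t, p (Suc t)) \<in> Ttr i"
    "\<exists>\<^sub>\<infinity>t. p t = Rst i" "vsum (pa_dim (A i)) vs \<in> pa_constr (A i)" "\<forall>x\<in>set vs. length x = pa_dim (A i)"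
    using run_exists[OF i _ \<beta>] u unfolding pa_lang_def by blast
  define P where "P t = (if t = 0 then Init else p t)" for t
  have tr: "(P t, (u \<frown> \<beta>) t, markv i (Vf M vs) t, P (Suc t)) \<in> lpba_trans Aut" for t
  proof (cases t)
    case 0
    have "(Init, (u \<frown> \<beta>) 0, (Vf M vs 0)[0 := i], p (Suc 0)) \<in> Tinit i"
      unfolding Tinit_def using r(2)[of 0] r(1) by auto
    then show ?thesis using 0 i by (auto simp: Aut_def P_def markv_def)
  next
    case (Suc t')
    then show ?thesis using r(2)[of t] i by (auto simp: Aut_def P_def markv_def)
  qed
  have inf: "\<exists>\<^sub>\<infinity>t. P t \<in> lpba_final Aut"
    using r(3) by (rule INFM_mono) (use r(1) i in \<open>auto simp: P_def Aut_def\<close>)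
  have "rho (lpba_dim Aut) (markv i (Vf M vs)) = E M i (vsum (pa_dim (A i)) vs)"
    using rho_Vf[OF r(5) dim_le[OF i]] by (simp add: Aut_def)
  then have "rho (lpba_dim Aut) (markv i (Vf M vs)) \<in> lpba_constr Aut"
    using r(4) i by (auto simp: Aut_def)
  then show ?thesis unfolding lpba_accepts_def using tr inf
    by (intro exI[of _ P] exI[of _ "markv i (Vf M vs)"]) (auto simp: P_def Aut_def)
qed

lemma lang_sub:
  assumes acc: "lpba_accepts Aut \<alpha>"
  shows "\<exists>i\<in>I. \<alpha> \<in> conc_lang (pa_lang (A i)) (omega_iter (nfa_lang i))"
proof -
  obtain P vv where r: "P 0 = lpba_init Aut" "\<And>t. (P t, \<alpha> t, vv t, P (Suc t)) \<in> lpba_trans Aut"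
    "\<exists>\<^sub>\<infinity>t. P t \<in> lpba_final Aut" "rho (lpba_dim Aut) vv \<in> lpba_constr Aut"
    using acc unfolding lpba_accepts_def by blast
  have r1: "P 0 = Init" using r(1) by (simp add: Aut_def)
  have "(Init, \<alpha> 0, vv 0, P (Suc 0)) \<in> (\<Union>j\<in>I. Ttr j \<union> Tinit j)" using r1 r(2)[of 0] by (simp add: Aut_def)
  then obtain i where i: "i \<in> I" "(Init, \<alpha> 0, vv 0, P (Suc 0)) \<in> Tinit i"
    using Ttr_comp by blast
  then obtain x where x: "vv 0 = x[0 := i]" "(Pst i (pa_init (A i)), \<alpha> 0, x, P (Suc 0)) \<in> Ttr i"
    unfolding Tinit_def by blast
  define p where "p = P(0 := Pst i (pa_init (A i)))"
  define v where "v = vv(0 := x)"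
  have run: "(p t, \<alpha> t, v t, p (Suc t)) \<in> Ttr i" for t
  proof (induction t)
    case 0 then show ?case using x by (simp add: p_def v_def)
  next
    case (Suc t)
    have c: "P (Suc t) \<noteq> Init" "stcomp (P (Suc t)) = i" using Ttr_comp[OF Suc] by (simp_all add: p_def)
    have "(P (Suc t), \<alpha> (Suc t), vv (Suc t), P (Suc (Suc t))) \<in> (\<Union>j\<in>I. Ttr j \<union> Tinit j)"
      using r(2) by (simp add: Aut_def)
    then obtain j where "j \<in> I" "(P (Suc t), \<alpha> (Suc t), vv (Suc t), P (Suc (Suc t))) \<in> Ttr j"
      using Tinit_src c(1) by blast
    moreover then have "j = i" using Ttr_comp c(2) by blast
    ultimately show ?case by (simp add: p_def v_def)
  qed
  have inf: "\<exists>\<^sub>\<infinity>t. p t = Rst i"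
    using r(3)
  proof (rule INFM_mono)
    fix t assume "P t \<in> lpba_final Aut"
    then obtain j where j: "P t = Rst j" by (auto simp: Aut_def)
    have "t \<noteq> 0"
    proof
      assume "t = 0" then show False using j r1 by simp
    qed
    then have "p t = Rst j" using j by (simp add: p_def)
    moreover have "stcomp (p t) = i" using Ttr_comp[OF run[of t]] by simp
    ultimately show "p t = Rst i" by simp
  qed
  have p0: "p 0 = Pst i (pa_init (A i))" by (simp add: p_def)
  obtain vs pp where d: "v = Vf M vs" "\<forall>x\<in>set vs. length x = pa_dim (A i)"
    "pp 0 = pa_init (A i)" "\<forall>k<length vs. (pp k, \<alpha> k, vs ! k, pp (Suc k)) \<in> pa_trans (A i)"
    "pp (length vs) \<in> pa_final (A i)" "suffix (length vs) \<alpha> \<in> omega_iter (nfa_lang i)"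
    using run_decomp[OF i(1) p0 run inf] by blast
  have vvm: "vv = markv i v"
  proof
    fix t show "vv t = markv i v t" by (cases "t = 0") (simp_all add: markv_def v_def x(1))
  qed
  have rh: "rho (lpba_dim Aut) vv = E M i (vsum (pa_dim (A i)) vs)"
    using rho_Vf[OF d(2) dim_le[OF i(1)]] d(1) vvm by (simp add: Aut_def)
  have "E M i (vsum (pa_dim (A i)) vs) \<in> (\<Union>j\<in>I. E M j ` pa_constr (A j))"
    using r(4) rh by (simp add: Aut_def)
  then obtain j c where j: "j \<in> I" "c \<in> pa_constr (A j)" "E M i (vsum (pa_dim (A i)) vs) = E M j c"
    by blast
  have "i = j" using j(3) by (simp add: E_def)
  have lc: "length c = pa_dim (A j)" using semilinear_len j(2) pa[OF j(1)] by (auto simp: is_pa_def)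
  have lv: "length (vsum (pa_dim (A i)) vs) = pa_dim (A i)" by (simp add: vsum_def)
  have "vsum (pa_dim (A i)) vs = c"
    using E_inj[OF j(3)] lv lc dim_le[OF i(1)] \<open>i = j\<close> by simp
  then have vc: "vsum (pa_dim (A i)) vs \<in> pa_constr (A i)" using j(2) \<open>i = j\<close> by simp
  have "pa_accepts (A i) (prefix (length vs) \<alpha>)"
    unfolding pa_accepts_def
  proof (intro exI[of _ pp] exI[of _ vs] conjI)
    show "\<forall>k<length (prefix (length vs) \<alpha>). (pp k, prefix (length vs) \<alpha> ! k, vs ! k, pp (Suc k)) \<in> pa_trans (A i)"
      using d(4) by simp
  qed (use d(3,5) vc in simp_all)
  then have u: "prefix (length vs) \<alpha> \<in> pa_lang (A i)" by (simp add: pa_lang_def)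
  have "\<alpha> = prefix (length vs) \<alpha> \<frown> suffix (length vs) \<alpha>" by (rule prefix_suffix)
  then have "\<alpha> \<in> conc_lang (pa_lang (A i)) (omega_iter (nfa_lang i))"
    unfolding conc_lang_def using u d(6) by blast
  then show ?thesis using i by blast
qed

lemma lang_eq: "lpba_lang Aut = (\<Union>i\<in>I. conc_lang (pa_lang (A i)) (omega_iter (nfa_lang i)))"
proof (rule set_eqI)
  fix \<alpha>
  show "\<alpha> \<in> lpba_lang Aut \<longleftrightarrow> \<alpha> \<in> (\<Union>i\<in>I. conc_lang (pa_lang (A i)) (omega_iter (nfa_lang i)))"
  proof
    assume "\<alpha> \<in> lpba_lang Aut"
    then show "\<alpha> \<in> (\<Union>i\<in>I. conc_lang (pa_lang (A i)) (omega_iter (nfa_lang i)))"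
      using lang_sub unfolding lpba_lang_def by blast
  next
    assume "\<alpha> \<in> (\<Union>i\<in>I. conc_lang (pa_lang (A i)) (omega_iter (nfa_lang i)))"
    then obtain i u \<beta> where "i \<in> I" "u \<in> pa_lang (A i)" "\<beta> \<in> omega_iter (nfa_lang i)" "\<alpha> = u \<frown> \<beta>"
      unfolding conc_lang_def by blast
    then show "\<alpha> \<in> lpba_lang Aut" using lang_sup unfolding lpba_lang_def by blast
  qed
qed

end

theorem lemma5:
  fixes \<Sigma> :: "'a set" and n :: nat
    and U V :: "nat \<Rightarrow> 'a list set" and L :: "'a word set"
  assumes "finite \<Sigma>"
    and "\<forall>i \<in> {1..n}. parikh_recognizable \<Sigma> (U i)"
    and "\<forall>i \<in> {1..n}. regular \<Sigma> (V i)"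
    and "L = (\<Union>i \<in> {1..n}. conc_lang (U i) (omega_iter (V i)))"
  shows "lpba_recognizable \<Sigma> L"
proof -
  from assms(2) have "\<forall>i\<in>{1..n}. \<exists>A :: (nat, 'a) pa. is_pa \<Sigma> A \<and> pa_lang A = U i"
    unfolding parikh_recognizable_def by blast
  from bchoice[OF this] obtain A :: "nat \<Rightarrow> (nat, 'a) pa" where A: "\<forall>i\<in>{1..n}. is_pa \<Sigma> (A i) \<and> pa_lang (A i) = U i" by blast
  define R where "R i x = (case x of (Q, q0, \<delta>, F) \<Rightarrow>
     finite Q \<and> q0 \<in> Q \<and> F \<subseteq> Q \<and> \<delta> \<subseteq> Q \<times> \<Sigma> \<times> Q \<and>
     V i = {w. \<exists>p :: nat \<Rightarrow> nat. p 0 = q0 \<and>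
            (\<forall>i < length w. (p i, w ! i, p (Suc i)) \<in> \<delta>) \<and> p (length w) \<in> F})" for i and x :: "nat set \<times> nat \<times> (nat \<times> 'a \<times> nat) set \<times> nat set"
  have "\<exists>x. R i x" if "i \<in> {1..n}" for i
  proof -
    have "regular \<Sigma> (V i)" using assms(3) that by blast
    then show ?thesis by (simp only: regular_def R_def split_paired_Ex prod.case)
  qed
  then have "\<forall>i\<in>{1..n}. \<exists>x. R i x" by blast
  from bchoice[OF this] obtain X where X: "\<forall>i\<in>{1..n}. R i (X i)" by blast
  define Q where "Q i = fst (X i)" for i
  define q0 where "q0 i = fst (snd (X i))" for i
  define \<delta> where "\<delta> i = fst (snd (snd (X i)))" for i
  define F where "F i = snd (snd (snd (X i)))" for i
  have X': "finite (Q i) \<and> q0 i \<in> Q i \<and> F i \<subseteq> Q i \<and> \<delta> i \<subseteq> Q i \<times> \<Sigma> \<times> Q i \<and>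
     V i = {w. \<exists>p :: nat \<Rightarrow> nat. p 0 = q0 i \<and>
            (\<forall>k < length w. (p k, w ! k, p (Suc k)) \<in> \<delta> i) \<and> p (length w) \<in> F i}" if "i \<in> {1..n}" for i
  proof -
    obtain a b c e where ab: "X i = (a, b, c, e)" by (cases "X i") auto
    have "R i (X i)" using X that by blast
    then show ?thesis using ab by (simp add: R_def Q_def q0_def \<delta>_def F_def)
  qed
  interpret c: cons \<Sigma> "{1..n}" A Q q0 \<delta> F
  proof
    show "finite {1..n}" by simp
    show "finite \<Sigma>" using assms(1) .
    show "\<And>i. i \<in> {1..n} \<Longrightarrow> is_pa \<Sigma> (A i)" using A by blast
    show "\<And>i. i \<in> {1..n} \<Longrightarrow> finite (Q i) \<and> q0 i \<in> Q i \<and> F i \<subseteq> Q i \<and> \<delta> i \<subseteq> Q i \<times> \<Sigma> \<times> Q i"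
      using X' by blast
  qed
  have "lpba_lang c.Aut = (\<Union>i \<in> {1..n}. conc_lang (U i) (omega_iter (V i)))"
    unfolding c.lang_eq
  proof (rule SUP_cong[OF refl])
    fix i assume i: "i \<in> {1..n}"
    have "pa_lang (A i) = U i" using A i by blast
    moreover have "c.nfa_lang i = V i" using X'[OF i] by (simp add: c.nfa_lang_def)
    ultimately show "conc_lang (pa_lang (A i)) (omega_iter (c.nfa_lang i)) = conc_lang (U i) (omega_iter (V i))"
      by simp
  qed
  then have "lpba_lang c.Aut = L" using assms(4) by simp
  then show ?thesis using lpba_rename[OF c.is_lpba_Aut] by blast
qed

end
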